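(* Let $X$ be a finite simplicial complex and $d\ge 0$. Put $r_d=\dim(\operatorname{im}(B_d^\intercal))$, $r_{d+1}=\dim(\operatorname{im}(B_{d+1}))$ and $n_d=\dim(C_d(X))$. Consider vector fields on $C_d(X)$ of the form $$\theta\mapsto B_d^\intercal F^{\downarrow}(B_d\theta)+B_{d+1}F^{\uparrow}(B_{d+1}^\intercal\theta),\qquad (\ast)$$ where $F^{\downarrow}:C_{d-1}(X)\to C_{d-1}(X)$ and $F^{\uparrow}:C_{d+1}(X)\to C_{d+1}(X)$ are arbitrary (nonlinear) maps. The conjugacy classes of all systems of the form $(\ast)$ are exactly the $(r_d,r_{d+1},n_d)$-vector fields. More specifically, every vector field of the form $(\ast)$ is conjugate to an $(r_d,r_{d+1},n_d)$-vector field; conversely, any $(r_d,r_{d+1},n_d)$-vector field is conjugate to a vector field of the form $(\ast)$ for some choice of $F^{\downarrow},F^{\uparrow}$.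
   Context: A finite simplicial complex $X$ on vertex set $\{1,\dots,n\}$ is a collection of nonempty subsets of $\{1,\dots,n\}$ closed under taking nonempty subsets; $X_d$ is the set of its simplices with $d+1$ elements. A $d$-simplex with vertices $i_0<\dots<i_d$ is written $[i_0,\dots,i_d]$. $C_d(X)$ is the real vector space with basis $X_d$ and the inner product making $X_d$ orthonormal ($C_d(X)=0$ if $X_d=\emptyset$; in particular $C_{-1}(X)=0$). The boundary map $\partial_d:C_d(X)\to C_{d-1}(X)$ is $\partial_d[i_0,\dots,i_d]=\sum_{k=0}^d(-1)^k[i_0,\dots,\widehat{i_k},\dots,i_d]$ (vertex $i_k$ omitted), and $B_d$ is its matrix with respect to fixed orderings of the bases $X_d$, $X_{d-1}$; $B_d^\intercal$ is its transpose. A map $H:\mathbb{R}^n\to\mathbb{R}^n$ is an $(\alpha,\beta,n)$-vector field ($\alpha+\beta\le n$) if there exist $H_1:\mathbb{R}^\alpha\to\mathbb{R}^\alpha$ and $H_2:\mathbb{R}^\beta\to\mathbb{R}^\beta$ with $H=H_1\oplus H_2\oplus H_3$ with respect to $\mathbb{R}^n=\mathbb{R}^\alpha\oplus\mathbb{R}^\beta\oplus\mathbb{R}^{n-\alpha-\beta}$, where $H_3$ is the zero map on $\mathbb{R}^{n-\alpha-\beta}$. Two vector fields $G$ on $U$ and $H$ on $V$ are conjugate if there is an invertible linear map $M:U\to V$ with $G(x)=M^{-1}H(Mx)$ for all $x$. *)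

theory Defs
  imports "Jordan_Normal_Form.DL_Rank"
begin

definition simplicial_complex :: "nat \<Rightarrow> nat set set \<Rightarrow> bool" where
  "simplicial_complex n X \<longleftrightarrow>
     (\<forall>S\<in>X. S \<noteq> {} \<and> S \<subseteq> {1..n}) \<and>
     (\<forall>S\<in>X. \<forall>T. T \<noteq> {} \<and> T \<subseteq> S \<longrightarrow> T \<in> X)"

(* simplices with exactly k vertices; X_d = simplices_card X (d+1) *)
definition simplices_card :: "nat set set \<Rightarrow> nat \<Rightarrow> nat set set" where
  "simplices_card X k = {S\<in>X. card S = k}"

(* coefficient of tau in the boundary of sigma:
   sigma = [i_0,...,i_d], tau = sigma with i_k removed gives (-1)^k, where
   k = number of vertices of sigma smaller than the omitted vertex *)
definition boundary_coeff :: "nat set \<Rightarrow> nat set \<Rightarrow> real" where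
  "boundary_coeff \<tau> \<sigma> =
     (if \<exists>v\<in>\<sigma>. \<tau> = \<sigma> - {v}
      then (-1) ^ card {w\<in>\<sigma>. w < (THE v. v \<in> \<sigma> \<and> \<tau> = \<sigma> - {v})}
      else 0)"

(* matrix of the boundary map C_d -> C_{d-1} w.r.t. orderings Lrow of X_{d-1} and Lcol of X_d *)
definition boundary_matrix :: "nat set list \<Rightarrow> nat set list \<Rightarrow> real mat" where
  "boundary_matrix Lrow Lcol =
     mat (length Lrow) (length Lcol) (\<lambda>(i, j). boundary_coeff (Lrow ! i) (Lcol ! j))"

definition dim_im :: "real mat \<Rightarrow> nat" where
  "dim_im A = vec_space.rank (dim_row A) A"

definition ab_vector_field :: "nat \<Rightarrow> nat \<Rightarrow> nat \<Rightarrow> (real vec \<Rightarrow> real vec) \<Rightarrow> bool" where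
  "ab_vector_field \<alpha> \<beta> n H \<longleftrightarrow> \<alpha> + \<beta> \<le> n \<and>
     (\<exists>H1 H2. (\<forall>x\<in>carrier_vec \<alpha>. H1 x \<in> carrier_vec \<alpha>) \<and>
              (\<forall>y\<in>carrier_vec \<beta>. H2 y \<in> carrier_vec \<beta>) \<and>
              (\<forall>x\<in>carrier_vec n. H x =
                  vec n (\<lambda>i. if i < \<alpha> then H1 (vec \<alpha> (\<lambda>j. x $ j)) $ i
                             else if i < \<alpha> + \<beta> then H2 (vec \<beta> (\<lambda>j. x $ (\<alpha> + j))) $ (i - \<alpha>)
                             else 0)))"

definition conjugate_vf :: "nat \<Rightarrow> (real vec \<Rightarrow> real vec) \<Rightarrow> nat \<Rightarrow> (real vec \<Rightarrow> real vec) \<Rightarrow> bool" where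
  "conjugate_vf m G n H \<longleftrightarrow>
     (\<exists>M \<in> carrier_mat n m. \<exists>Minv \<in> carrier_mat m n.
        M * Minv = 1\<^sub>m n \<and> Minv * M = 1\<^sub>m m \<and>
        (\<forall>x\<in>carrier_vec m. G x = Minv *\<^sub>v H (M *\<^sub>v x)))"

definition hodge_field :: "real mat \<Rightarrow> real mat \<Rightarrow> (real vec \<Rightarrow> real vec) \<Rightarrow> (real vec \<Rightarrow> real vec)
    \<Rightarrow> real vec \<Rightarrow> real vec" where
  "hodge_field Bd Bd1 Fdown Fup \<theta> =
     transpose_mat Bd *\<^sub>v Fdown (Bd *\<^sub>v \<theta>) + Bd1 *\<^sub>v Fup (transpose_mat Bd1 *\<^sub>v \<theta>)"

end

theory Submission
  imports Defs "Jordan_Normal_Form.Gram_Schmidt"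
begin

lemma bc_remove:
  assumes "v \<in> \<sigma>"
  shows "boundary_coeff (\<sigma> - {v}) \<sigma> = (-1) ^ card {w\<in>\<sigma>. w < v}"
proof -
  have "(THE x. x \<in> \<sigma> \<and> \<sigma> - {v} = \<sigma> - {x}) = v"
    by (rule the_equality) (use assms in auto)
  thus ?thesis using assms unfolding boundary_coeff_def by auto
qed

lemma bc_nonzero: "boundary_coeff \<tau> \<sigma> \<noteq> 0 \<Longrightarrow> \<exists>v\<in>\<sigma>. \<tau> = \<sigma> - {v}"
  by (auto simp: boundary_coeff_def split: if_splits)

lemma bb_sum_zero:
  assumes clos: "\<forall>S\<in>X. \<forall>T. T \<noteq> {} \<and> T \<subseteq> S \<longrightarrow> T \<in> X"
    and Ld: "set Ld = simplices_card X (d + 1)"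
    and sX: "\<sigma> \<in> X" and sc: "card \<sigma> = d + 2"
  shows "(\<Sum>\<tau>\<in>set Ld. boundary_coeff \<rho> \<tau> * boundary_coeff \<tau> \<sigma>) = 0"
proof -
  have fin: "finite \<sigma>" using sc by (metis card.infinite add_2_eq_Suc' nat.distinct(1))
  have inLd: "\<sigma> - {v} \<in> set Ld" if "v \<in> \<sigma>" for v
  proof -
    have "card (\<sigma> - {v}) = d + 1" using that fin sc by simp
    moreover have "\<sigma> - {v} \<noteq> {}"
    proof
      assume "\<sigma> - {v} = {}"
      with calculation show False by (metis card.empty add_is_0 one_neq_zero)
    qed
    ultimately show ?thesis using clos sX Ld unfolding simplices_card_def by auto
  qed
  have key: "\<exists>x\<in>\<sigma>. \<exists>y\<in>\<sigma>. x \<noteq> y \<and> \<tau> = \<sigma> - {x} \<and> \<rho> = \<sigma> - {x} - {y}"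
    if "boundary_coeff \<rho> \<tau> * boundary_coeff \<tau> \<sigma> \<noteq> 0" for \<tau>
  proof -
    from that have "boundary_coeff \<tau> \<sigma> \<noteq> 0" "boundary_coeff \<rho> \<tau> \<noteq> 0" by auto
    from bc_nonzero[OF this(1)] obtain x where x: "x \<in> \<sigma>" "\<tau> = \<sigma> - {x}" by auto
    from bc_nonzero[OF \<open>boundary_coeff \<rho> \<tau> \<noteq> 0\<close>] obtain y where y: "y \<in> \<tau>" "\<rho> = \<tau> - {y}" by auto
    have "y \<in> \<sigma>" "x \<noteq> y" using x y by auto
    then show ?thesis using x y by blast
  qed
  show ?thesis
  proof (cases "\<exists>v\<in>\<sigma>. \<exists>w\<in>\<sigma>. v < w \<and> \<rho> = \<sigma> - {v} - {w}")
    case True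
    then obtain v w where vw: "v \<in> \<sigma>" "w \<in> \<sigma>" "v < w" "\<rho> = \<sigma> - {v} - {w}" by auto
    define t1 where "t1 = \<sigma> - {v}"
    define t2 where "t2 = \<sigma> - {w}"
    have t12: "t1 \<noteq> t2" using vw unfolding t1_def t2_def by auto
    have sub: "{t1, t2} \<subseteq> set Ld" using inLd vw unfolding t1_def t2_def by auto
    have zero: "boundary_coeff \<rho> \<tau> * boundary_coeff \<tau> \<sigma> = 0" if "\<tau> \<in> set Ld - {t1, t2}" for \<tau>
    proof (rule ccontr)
      assume "boundary_coeff \<rho> \<tau> * boundary_coeff \<tau> \<sigma> \<noteq> 0"
      from key[OF this] obtain x y where xy: "x \<in> \<sigma>" "y \<in> \<sigma>" "x \<noteq> y" "\<tau> = \<sigma> - {x}" "\<rho> = \<sigma> - {x} - {y}" by auto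
      have "x = v \<or> x = w"
      proof (rule ccontr)
        assume "\<not> (x = v \<or> x = w)"
        then have "x \<in> \<rho>" using vw xy(1) by auto
        then show False using xy by auto
      qed
      then show False using that xy unfolding t1_def t2_def by auto
    qed
    have "(\<Sum>\<tau>\<in>set Ld. boundary_coeff \<rho> \<tau> * boundary_coeff \<tau> \<sigma>)
        = (\<Sum>\<tau>\<in>{t1,t2}. boundary_coeff \<rho> \<tau> * boundary_coeff \<tau> \<sigma>)"
      by (rule sum.mono_neutral_right) (use sub zero in auto)
    also have "\<dots> = boundary_coeff \<rho> t1 * boundary_coeff t1 \<sigma> + boundary_coeff \<rho> t2 * boundary_coeff t2 \<sigma>"
      using t12 by simp
    also have "\<dots> = 0"
    proof -
      have r1: "\<rho> = t1 - {w}" and r2: "\<rho> = t2 - {v}" using vw unfolding t1_def t2_def by auto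
      have w1: "w \<in> t1" and v2: "v \<in> t2" using vw unfolding t1_def t2_def by auto
      have e1: "{x\<in>t1. x < w} = {x\<in>\<sigma>. x < w} - {v}" unfolding t1_def by auto
      have e2: "{x\<in>t2. x < v} = {x\<in>\<sigma>. x < v}" unfolding t2_def using vw by auto
      have vin: "v \<in> {x\<in>\<sigma>. x < w}" using vw by auto
      have finw: "finite {x\<in>\<sigma>. x < w}" using fin by auto
      obtain q where q: "card {x\<in>\<sigma>. x < w} = Suc q"
        using card_gt_0_iff[of "{x\<in>\<sigma>. x < w}"] vin finw by (metis gr0_conv_Suc empty_iff)
      have c1: "card {x\<in>t1. x < w} = q" unfolding e1 using q vin finw by simp
      have a1: "boundary_coeff \<rho> t1 = (-1)^q" using r1 bc_remove[OF w1] c1 by simp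
      have a2: "boundary_coeff t1 \<sigma> = (-1)^card{x\<in>\<sigma>. x<v}" unfolding t1_def by (rule bc_remove[OF vw(1)])
      have a3: "boundary_coeff \<rho> t2 = (-1)^card{x\<in>\<sigma>. x<v}" using r2 bc_remove[OF v2] e2 by simp
      have a4: "boundary_coeff t2 \<sigma> = (-1)^Suc q" unfolding t2_def using bc_remove[OF vw(2)] q by simp
      show ?thesis by (simp add: a1 a2 a3 a4)
    qed
    finally show ?thesis .
  next
    case False
    show ?thesis
    proof (rule sum.neutral, rule ballI, rule ccontr)
      fix \<tau> assume "\<tau> \<in> set Ld" "boundary_coeff \<rho> \<tau> * boundary_coeff \<tau> \<sigma> \<noteq> 0"
      from key[OF this(2)] obtain x y where xy: "x \<in> \<sigma>" "y \<in> \<sigma>" "x \<noteq> y" "\<rho> = \<sigma> - {x} - {y}" by auto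
      show False
      proof (cases "x < y")
        case True then show False using False xy by blast
      next
        case False
        then have "y < x" using xy(3) by auto
        moreover have "\<rho> = \<sigma> - {y} - {x}" using xy by auto
        ultimately show False using \<open>\<not> (\<exists>v\<in>\<sigma>. \<exists>w\<in>\<sigma>. v < w \<and> \<rho> = \<sigma> - {v} - {w})\<close> xy by blast
      qed
    qed
  qed
qed

lemma boundary_boundary:
  assumes clos: "\<forall>S\<in>X. \<forall>T. T \<noteq> {} \<and> T \<subseteq> S \<longrightarrow> T \<in> X"
    and dLd: "distinct Ld"
    and Ld: "set Ld = simplices_card X (d + 1)"
    and Lp: "set Lp = simplices_card X (d + 2)"
  shows "boundary_matrix Lm Ld * boundary_matrix Ld Lp = 0\<^sub>m (length Lm) (length Lp)"
proof (rule eq_matI)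
  fix i k assume i: "i < dim_row (0\<^sub>m (length Lm) (length Lp))" and k: "k < dim_col (0\<^sub>m (length Lm) (length Lp))"
  have "(boundary_matrix Lm Ld * boundary_matrix Ld Lp) $$ (i, k)
      = (\<Sum>j<length Ld. boundary_coeff (Lm ! i) (Ld ! j) * boundary_coeff (Ld ! j) (Lp ! k))"
    using i k by (simp add: boundary_matrix_def scalar_prod_def lessThan_atLeast0)
  also have "\<dots> = (\<Sum>\<tau>\<in>set Ld. boundary_coeff (Lm ! i) \<tau> * boundary_coeff \<tau> (Lp ! k))"
  proof -
    have im: "nth Ld ` {..<length Ld} = set Ld" by (auto simp: set_conv_nth)
    show ?thesis
      using sum.reindex[OF inj_on_nth[OF dLd, of "{..<length Ld}"], of "\<lambda>\<tau>. boundary_coeff (Lm ! i) \<tau> * boundary_coeff \<tau> (Lp ! k)"]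
      unfolding im by simp
  qed
  also have "\<dots> = 0"
  proof -
    have "Lp ! k \<in> set Lp" using k by simp
    then have "Lp ! k \<in> X" "card (Lp ! k) = d + 2" using Lp unfolding simplices_card_def by auto
    then show ?thesis by (rule bb_sum_zero[OF clos Ld])
  qed
  finally show "(boundary_matrix Lm Ld * boundary_matrix Ld Lp) $$ (i, k) = 0\<^sub>m (length Lm) (length Lp) $$ (i, k)"
    using i k by simp
qed (simp_all add: boundary_matrix_def)

lemma conjugate_real_vec[simp]: "conjugate (w :: real vec) = w"
  by (rule eq_vecI) (auto simp: conjugate_vec_def conjugate_real_def)

lemma corthogonal_iff:
  "corthogonal xs \<longleftrightarrow> distinct xs \<and> (\<forall>x\<in>set xs. \<forall>y\<in>set xs. (x \<bullet>c y = 0) \<longleftrightarrow> x \<noteq> y)"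
proof
  assume c: "corthogonal xs"
  have d: "distinct xs" using corthogonal_distinct[OF c] .
  show "distinct xs \<and> (\<forall>x\<in>set xs. \<forall>y\<in>set xs. (x \<bullet>c y = 0) \<longleftrightarrow> x \<noteq> y)"
  proof (intro conjI d ballI)
    fix x y assume "x \<in> set xs" "y \<in> set xs"
    then obtain i j where ij: "i < length xs" "j < length xs" "x = xs ! i" "y = xs ! j"
      by (metis in_set_conv_nth)
    show "(x \<bullet>c y = 0) \<longleftrightarrow> x \<noteq> y"
      using corthogonalD[OF c ij(1,2)] nth_eq_iff_index_eq[OF d ij(1,2)] ij by auto
  qed
next
  assume r: "distinct xs \<and> (\<forall>x\<in>set xs. \<forall>y\<in>set xs. (x \<bullet>c y = 0) \<longleftrightarrow> x \<noteq> y)"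
  show "corthogonal xs"
  proof (rule corthogonalI)
    fix i j assume ij: "i < length xs" "j < length xs"
    then show "(xs ! i \<bullet>c xs ! j = 0) = (i \<noteq> j)"
      using r nth_eq_iff_index_eq[of xs i j] by auto
  qed
qed

context cof_vec_space
begin

lemma maximal_span:
  assumes S: "S \<subseteq> carrier_vec n" and m: "maximal U (\<lambda>T. T \<subseteq> S \<and> lin_indpt T)"
  shows "S \<subseteq> span U"
proof
  fix s assume s: "s \<in> S"
  from m have U: "U \<subseteq> S" "lin_indpt U" and mx: "\<forall>B. B \<supseteq> U \<and> B \<subseteq> S \<and> lin_indpt B \<longrightarrow> B = U"
    unfolding maximal_def by auto
  have Uc: "U \<subseteq> carrier_vec n" using U S by auto
  show "s \<in> span U"
  proof (cases "s \<in> U")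
    case True then show ?thesis using in_own_span[of U] Uc by auto
  next
    case False
    show ?thesis
    proof (rule ccontr)
      assume "s \<notin> span U"
      then have "lin_indpt (U \<union> {s})" using lin_dep_iff_in_span[of U s] Uc U(2) False s S by auto
      then have "U \<union> {s} = U" using mx U s by auto
      then show False using False by auto
    qed
  qed
qed

lemma corth_indpt:
  assumes xs: "set xs \<subseteq> carrier_vec n" and c: "corthogonal xs"
  shows "lin_indpt (set xs)"
proof
  assume "lin_dep (set xs)"
  from this[unfolded lin_dep_def] obtain A a v where
      fin: "finite A" and A: "A \<subseteq> set xs"
      and lc: "lincomb a A = 0\<^sub>v n" and v: "v \<in> A" and av: "a v \<noteq> 0"
      by auto
  have Ac: "A \<subseteq> carrier_vec n" using A xs by auto
  have vc: "v \<in> carrier_vec n" using v Ac by auto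
  have orth: "\<And>x y. x \<in> set xs \<Longrightarrow> y \<in> set xs \<Longrightarrow> (x \<bullet>c y = 0) \<longleftrightarrow> x \<noteq> y"
    using c unfolding corthogonal_iff by auto
  have "lincomb a A \<bullet>c v = (\<Sum>i<n. lincomb a A $ i * conjugate v $ i)"
    using vc by (simp add: scalar_prod_def lessThan_atLeast0)
  also have "\<dots> = (\<Sum>i<n. (\<Sum>u\<in>A. a u * u $ i) * conjugate v $ i)"
    by (rule sum.cong) (auto simp: lincomb_index[OF _ Ac])
  also have "\<dots> = (\<Sum>u\<in>A. a u * (\<Sum>i<n. u $ i * conjugate v $ i))"
    by (simp add: sum_distrib_left sum_distrib_right mult.assoc) (rule sum.swap)
  also have "\<dots> = (\<Sum>u\<in>A. a u * (u \<bullet>c v))"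
    by (rule sum.cong) (use vc Ac in \<open>auto simp: scalar_prod_def lessThan_atLeast0\<close>)
  also have "\<dots> = a v * (v \<bullet>c v)"
  proof -
    have "(\<Sum>u\<in>A - {v}. a u * (u \<bullet>c v)) = 0"
      by (rule sum.neutral) (use orth A v in auto)
    then show ?thesis using sum.remove[OF fin v, of "\<lambda>u. a u * (u \<bullet>c v)"] by simp
  qed
  finally have "a v * (v \<bullet>c v) = 0" using lc vc by simp
  moreover have "v \<bullet>c v \<noteq> 0" using orth A v by auto
  ultimately show False using av by simp
qed

end

lemma gs_sub_suffix: "\<exists>hs. gram_schmidt_sub n acc xs = hs @ acc \<and> length hs = length xs"
proof (induction xs arbitrary: acc)
  case Nil then show ?case by simp
next
  case (Cons w ws)
  obtain hs where "gram_schmidt_sub n ((adjuster n w acc + w) # acc) ws = hs @ ((adjuster n w acc + w) # acc)"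
     "length hs = length ws" using Cons.IH by blast
  then show ?case by (intro exI[of _ "hs @ [adjuster n w acc + w]"]) simp
qed

context cof_vec_space
begin

lemma span_char:
  assumes xs: "set xs \<subseteq> carrier_vec n"
  shows "x \<in> span (set xs) \<longleftrightarrow> (\<exists>c\<in>carrier_vec (length xs). x = mat_of_cols n xs *\<^sub>v c)"
proof -
  have dims: "\<forall>w\<in>set xs. dim_vec w = n" using xs by auto
  have "x \<in> span (set xs) \<longleftrightarrow> x \<in> span_list xs" using span_list_as_span[OF xs] by simp
  also have "\<dots> \<longleftrightarrow> (\<exists>c. x = lincomb_list c xs)"
    unfolding span_list_def by (auto simp: class_ring_simps)
  also have "\<dots> \<longleftrightarrow> (\<exists>c\<in>carrier_vec (length xs). x = mat_of_cols n xs *\<^sub>v c)"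
  proof
    assume "\<exists>c. x = lincomb_list c xs"
    then obtain c where "x = lincomb_list c xs" by auto
    then show "\<exists>c\<in>carrier_vec (length xs). x = mat_of_cols n xs *\<^sub>v c"
      using lincomb_list_as_mat_mult[OF dims] by auto
  next
    assume "\<exists>c\<in>carrier_vec (length xs). x = mat_of_cols n xs *\<^sub>v c"
    then obtain c where c: "c \<in> carrier_vec (length xs)" "x = mat_of_cols n xs *\<^sub>v c" by auto
    have "vec (length xs) (\<lambda>i. c $ i) = c" using c(1) by (intro eq_vecI) auto
    then have "x = lincomb_list (\<lambda>i. c $ i) xs"
      using lincomb_list_as_mat_mult[OF dims, of "\<lambda>i. c $ i"] c(2) by simp
    then show "\<exists>c. x = lincomb_list c xs" by blast
  qed
  finally show ?thesis .
qed

lemma colspace_char: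
  assumes A: "A \<in> carrier_mat n k"
  shows "x \<in> span (set (cols A)) \<longleftrightarrow> (\<exists>y\<in>carrier_vec k. x = A *\<^sub>v y)"
proof -
  have c: "set (cols A) \<subseteq> carrier_vec n" using A cols_dim by blast
  have "mat_of_cols n (cols A) = A" using A mat_of_cols_cols[of A] by auto
  moreover have "length (cols A) = k" using A by simp
  ultimately show ?thesis using span_char[OF c, of x] by simp
qed

lemma orth_span:
  assumes xs: "set xs \<subseteq> carrier_vec n" and h: "h \<in> carrier_vec n"
    and o: "\<forall>u\<in>set xs. u \<bullet> h = 0" and x: "x \<in> span (set xs)"
  shows "x \<bullet> h = 0"
proof -
  obtain c where c: "c \<in> carrier_vec (length xs)" "x = mat_of_cols n xs *\<^sub>v c"
    using x span_char[OF xs] by auto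
  let ?M = "mat_of_cols n xs"
  have M: "?M \<in> carrier_mat n (length xs)" by simp
  have z: "transpose_mat ?M *\<^sub>v h = 0\<^sub>v (length xs)"
  proof (rule eq_vecI)
    fix j assume "j < dim_vec (0\<^sub>v (length xs) :: 'a vec)"
    then have j: "j < length xs" by simp
    have "(transpose_mat ?M *\<^sub>v h) $ j = col ?M j \<bullet> h" using j by simp
    also have "col ?M j = xs ! j" using j xs by (intro col_mat_of_cols) auto
    finally show "(transpose_mat ?M *\<^sub>v h) $ j = 0\<^sub>v (length xs) $ j" using o j by simp
  qed simp
  have "x \<bullet> h = h \<bullet> x" using comm_scalar_prod[OF mult_mat_vec_carrier[OF M c(1)] h] c(2) by simp
  also have "\<dots> = (transpose_mat ?M *\<^sub>v h) \<bullet> c" using transpose_vec_mult_scalar[OF M c(1) h] c by simp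
  also have "\<dots> = 0" unfolding z using c by simp
  finally show ?thesis .
qed

lemma col_basis:
  assumes A: "A \<in> carrier_mat n k"
  shows "\<exists>us. set us \<subseteq> carrier_vec n \<and> corthogonal us \<and> length us = rank A
            \<and> span (set us) = span (set (cols A))"
proof -
  obtain S where S: "maximal S (\<lambda>T. T \<subseteq> set (cols A) \<and> lin_indpt T)"
    using maximal_exists[of "(\<lambda>T. T \<subseteq> set (cols A) \<and> lin_indpt T)" "card (set (cols A))" "{}"]
    by (meson List.finite_set card_mono empty_iff empty_subsetI finite_lin_indpt2 rev_finite_subset)
  have rk: "rank A = card S" using rank_card_indpt[OF A S] .
  have Ssub: "S \<subseteq> set (cols A)" and Sind: "lin_indpt S" using S unfolding maximal_def by auto
  have colc: "set (cols A) \<subseteq> carrier_vec n" using A cols_dim by blast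
  have Sc: "S \<subseteq> carrier_vec n" using Ssub colc by auto
  have finS: "finite S" using Ssub finite_subset by blast
  have sp1: "set (cols A) \<subseteq> span S" using maximal_span[OF colc S] .
  have spS: "span S = span (set (cols A))"
  proof
    show "span S \<subseteq> span (set (cols A))" using span_is_monotone[OF Ssub] .
    show "span (set (cols A)) \<subseteq> span S" using span_subsetI[OF Sc sp1] .
  qed
  obtain xs where xs: "set xs = S" "distinct xs" using finite_distinct_list[OF finS] by auto
  define us where "us = gram_schmidt n xs"
  have xsc: "set xs \<subseteq> carrier_vec n" using xs Sc by simp
  have ind: "\<not> lin_dep (set xs)" using xs Sind by simp
  note gs = gram_schmidt_result[OF xsc xs(2) ind us_def]
  show ?thesis
  proof (intro exI[of _ us] conjI)
    show "set us \<subseteq> carrier_vec n" using gs(3) .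
    show "corthogonal us" using gs(2) .
    show "length us = rank A" using gs(4) rk xs distinct_card by metis
    show "span (set us) = span (set (cols A))" using gs(1) xs spS by simp
  qed
qed

end

lemma basis_construction:
  fixes A B :: "real mat"
  assumes A: "A \<in> carrier_mat N m" and B: "B \<in> carrier_mat N p"
    and AB: "transpose_mat A * B = 0\<^sub>m m p"
  shows "\<exists>us ws hs Minv. set us \<subseteq> carrier_vec N \<and> set ws \<subseteq> carrier_vec N \<and> set hs \<subseteq> carrier_vec N
    \<and> length us = vec_space.rank N A \<and> length ws = vec_space.rank N B
    \<and> length us + length ws + length hs = N
    \<and> (\<forall>c\<in>carrier_vec (length us). \<exists>y\<in>carrier_vec m. mat_of_cols N us *\<^sub>v c = A *\<^sub>v y)
    \<and> (\<forall>y\<in>carrier_vec m. \<exists>c\<in>carrier_vec (length us). A *\<^sub>v y = mat_of_cols N us *\<^sub>v c)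
    \<and> (\<forall>c\<in>carrier_vec (length ws). \<exists>z\<in>carrier_vec p. mat_of_cols N ws *\<^sub>v c = B *\<^sub>v z)
    \<and> (\<forall>z\<in>carrier_vec p. \<exists>c\<in>carrier_vec (length ws). B *\<^sub>v z = mat_of_cols N ws *\<^sub>v c)
    \<and> (\<forall>h\<in>set hs. transpose_mat A *\<^sub>v h = 0\<^sub>v m \<and> transpose_mat B *\<^sub>v h = 0\<^sub>v p)
    \<and> Minv \<in> carrier_mat N N \<and> Minv * mat_of_cols N (us @ ws @ hs) = 1\<^sub>m N
    \<and> mat_of_cols N (us @ ws @ hs) * Minv = 1\<^sub>m N"
proof -
  interpret V: cof_vec_space N "TYPE(real)" .
  obtain us where us: "set us \<subseteq> carrier_vec N" "corthogonal us" "length us = V.rank A"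
      "V.span (set us) = V.span (set (cols A))"
    using V.col_basis[OF A] by auto
  obtain ws where ws: "set ws \<subseteq> carrier_vec N" "corthogonal ws" "length ws = V.rank B"
      "V.span (set ws) = V.span (set (cols B))"
    using V.col_basis[OF B] by auto
  have colA: "\<And>x. x \<in> V.span (set us) \<longleftrightarrow> (\<exists>y\<in>carrier_vec m. x = A *\<^sub>v y)"
    using V.colspace_char[OF A] us(4) by simp
  have colB: "\<And>x. x \<in> V.span (set ws) \<longleftrightarrow> (\<exists>y\<in>carrier_vec p. x = B *\<^sub>v y)"
    using V.colspace_char[OF B] ws(4) by simp
  have spU: "\<And>x. x \<in> V.span (set us) \<longleftrightarrow> (\<exists>c\<in>carrier_vec (length us). x = mat_of_cols N us *\<^sub>v c)"
    using V.span_char[OF us(1)] .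
  have spW: "\<And>x. x \<in> V.span (set ws) \<longleftrightarrow> (\<exists>c\<in>carrier_vec (length ws). x = mat_of_cols N ws *\<^sub>v c)"
    using V.span_char[OF ws(1)] .
  have ownU: "set us \<subseteq> V.span (set us)" using V.in_own_span us(1) by auto
  have ownW: "set ws \<subseteq> V.span (set ws)" using V.in_own_span ws(1) by auto
  have crossAB: "(A *\<^sub>v y) \<bullet> (B *\<^sub>v z) = 0" if y: "y \<in> carrier_vec m" and z: "z \<in> carrier_vec p" for y z
  proof -
    have At: "transpose_mat A \<in> carrier_mat m N" using A by simp
    have Bz: "B *\<^sub>v z \<in> carrier_vec N" using B z by simp
    have e: "transpose_mat A *\<^sub>v (B *\<^sub>v z) = 0\<^sub>v m"
    proof -
      have "transpose_mat A *\<^sub>v (B *\<^sub>v z) = (transpose_mat A * B) *\<^sub>v z"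
        using At B z by (simp add: assoc_mult_mat_vec)
      also have "\<dots> = 0\<^sub>v m" unfolding AB using z
        by (intro eq_vecI) (auto simp: mult_mat_vec_def scalar_prod_def)
      finally show ?thesis .
    qed
    have "(A *\<^sub>v y) \<bullet> (B *\<^sub>v z) = (transpose_mat (transpose_mat A) *\<^sub>v y) \<bullet> (B *\<^sub>v z)" by simp
    also have "\<dots> = y \<bullet> (transpose_mat A *\<^sub>v (B *\<^sub>v z))"
      using transpose_vec_mult_scalar[OF At Bz y] .
    also have "\<dots> = 0" unfolding e using y by simp
    finally show ?thesis .
  qed
  have cross: "u \<bullet> w = 0" if "u \<in> set us" "w \<in> set ws" for u w
  proof -
    have "u \<in> V.span (set us)" using ownU that(1) by auto
    then obtain y where y: "y \<in> carrier_vec m" "u = A *\<^sub>v y" using colA by auto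
    have "w \<in> V.span (set ws)" using ownW that(2) by auto
    then obtain z where z: "z \<in> carrier_vec p" "w = B *\<^sub>v z" using colB by auto
    show ?thesis using crossAB[OF y(1) z(1)] y z by simp
  qed
  have oU: "\<And>x y. x \<in> set us \<Longrightarrow> y \<in> set us \<Longrightarrow> (x \<bullet> y = 0) \<longleftrightarrow> x \<noteq> y"
    using us(2) unfolding corthogonal_iff by auto
  have oW: "\<And>x y. x \<in> set ws \<Longrightarrow> y \<in> set ws \<Longrightarrow> (x \<bullet> y = 0) \<longleftrightarrow> x \<noteq> y"
    using ws(2) unfolding corthogonal_iff by auto
  have disj: "set us \<inter> set ws = {}"
  proof (rule ccontr)
    assume "set us \<inter> set ws \<noteq> {}"
    then obtain x where "x \<in> set us" "x \<in> set ws" by auto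
    then show False using cross oU by blast
  qed
  have dUW: "corthogonal (us @ ws)"
    unfolding corthogonal_iff
  proof (intro conjI ballI)
    show "distinct (us @ ws)" using disj corthogonal_distinct[OF us(2)] corthogonal_distinct[OF ws(2)] by simp
    fix x y assume x: "x \<in> set (us @ ws)" and y: "y \<in> set (us @ ws)"
    have xc: "x \<in> carrier_vec N" and yc: "y \<in> carrier_vec N" using x y us(1) ws(1) by auto
    have "(x \<bullet> y = 0) \<longleftrightarrow> x \<noteq> y"
    proof (cases "x \<in> set us")
      case True
      then show ?thesis
      proof (cases "y \<in> set us")
        case True then show ?thesis using oU \<open>x \<in> set us\<close> by auto
      next
        case False then have "y \<in> set ws" using y by auto
        then show ?thesis using cross \<open>x \<in> set us\<close> disj by auto
      qed
    next
      case False then have xw: "x \<in> set ws" using x by auto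
      then show ?thesis
      proof (cases "y \<in> set us")
        case True
        have "x \<bullet> y = y \<bullet> x" using comm_scalar_prod[OF xc yc] .
        then show ?thesis using cross[OF True xw] True xw disj by auto
      next
        case False then have "y \<in> set ws" using y by auto
        then show ?thesis using oW xw by auto
      qed
    qed
    then show "(x \<bullet>c y = 0) \<longleftrightarrow> x \<noteq> y" by simp
  qed
  have UWc: "set (us @ ws) \<subseteq> carrier_vec N" using us(1) ws(1) by auto
  have indUW: "V.lin_indpt (set (us @ ws))" using V.corth_indpt[OF UWc dUW] .
  define S0 where "S0 = set (us @ ws) \<union> set (unit_vecs N)"
  have S0c: "S0 \<subseteq> carrier_vec N" unfolding S0_def using UWc unit_vecs_carrier by auto
  obtain T where T: "finite T" "maximal T (\<lambda>T. T \<subseteq> S0 \<and> V.lin_indpt T)" "set (us @ ws) \<subseteq> T"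
    using maximal_exists_superset[of S0 "\<lambda>T. T \<subseteq> S0 \<and> V.lin_indpt T" "set (us @ ws)"] indUW
    unfolding S0_def by auto
  have TS0: "T \<subseteq> S0" and Tind: "V.lin_indpt T" using T(2) unfolding maximal_def by auto
  have Tc: "T \<subseteq> carrier_vec N" using TS0 S0c by auto
  have spT: "S0 \<subseteq> V.span T" using V.maximal_span[OF S0c T(2)] .
  have genT: "V.span T = carrier_vec N"
  proof
    show "V.span T \<subseteq> carrier_vec N" using V.span_closed[OF Tc] by auto
    have "set (unit_vecs N) \<subseteq> V.span T" using spT unfolding S0_def by auto
    then have "V.span (set (unit_vecs N)) \<subseteq> V.span T" using V.span_subsetI[OF Tc] by auto
    then show "carrier_vec N \<subseteq> V.span T" using V.span_unit_vecs_is_carrier by simp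
  qed
  have basisT: "V.basis T" unfolding V.basis_def using Tind genT Tc by auto
  have cardT: "card T = N" using V.dim_basis[OF T(1) basisT] V.dim_is_n by simp
  obtain es where es: "set es = T - set (us @ ws)" "distinct es"
    using finite_distinct_list[of "T - set (us @ ws)"] T(1) by auto
  have esc: "set es \<subseteq> carrier_vec N" using es Tc by auto
  have dAll: "distinct ((us @ ws) @ es)" using es corthogonal_distinct[OF dUW] by auto
  have setAll: "set ((us @ ws) @ es) = T" using es T(3) by auto
  have lenAll: "length ((us @ ws) @ es) = N" using distinct_card[OF dAll] setAll cardT by metis
  have indAll: "\<not> V.lin_dep (set ((us @ ws) @ es))" using setAll Tind by simp
  define Q where "Q = gram_schmidt_sub N (us @ ws) es"
  note gsr = V.gram_schmidt_sub_result[OF Q_def[symmetric] esc UWc dAll indAll dUW]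
  obtain hs where hs: "Q = hs @ (us @ ws)" "length hs = length es"
    using gs_sub_suffix[of N "us @ ws" es] Q_def by auto
  define L where "L = us @ ws @ hs"
  have setL: "set L = set Q" by (auto simp: L_def hs)
  have lenL: "length L = N" using lenAll hs(2) by (simp add: L_def)
  have lenQ: "length Q = N" using lenL by (simp add: L_def hs)
  have dL: "distinct L"
  proof (rule card_distinct)
    have "card (set L) = card (set Q)" using setL by simp
    also have "\<dots> = length Q" using gsr distinct_card by blast
    finally show "card (set L) = length L" using lenL lenQ by simp
  qed
  have cL: "corthogonal L" using corthogonal_sort[OF dL, of Q] setL gsr by auto
  have Lc: "set L \<subseteq> carrier_vec N" using setL gsr by auto
  have oL: "\<And>x y. x \<in> set L \<Longrightarrow> y \<in> set L \<Longrightarrow> (x \<bullet> y = 0) \<longleftrightarrow> x \<noteq> y"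
    using cL unfolding corthogonal_iff by auto
  have hsc: "set hs \<subseteq> carrier_vec N" using Lc by (auto simp: L_def)
  have hU: "\<forall>u\<in>set us. u \<bullet> h = 0" if h: "h \<in> set hs" for h
  proof
    fix u assume u: "u \<in> set us"
    have "u \<noteq> h" using dL u h by (auto simp: L_def)
    then show "u \<bullet> h = 0" using oL u h by (auto simp: L_def)
  qed
  have hW: "\<forall>u\<in>set ws. u \<bullet> h = 0" if h: "h \<in> set hs" for h
  proof
    fix u assume u: "u \<in> set ws"
    have "u \<noteq> h" using dL u h by (auto simp: L_def)
    then show "u \<bullet> h = 0" using oL u h by (auto simp: L_def)
  qed
  have hA: "transpose_mat A *\<^sub>v h = 0\<^sub>v m" if h: "h \<in> set hs" for h
  proof (rule eq_vecI)
    have hc: "h \<in> carrier_vec N" using h hsc by auto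
    fix i assume "i < dim_vec (0\<^sub>v m :: real vec)"
    then have i: "i < m" by simp
    have "(transpose_mat A *\<^sub>v h) $ i = col A i \<bullet> h" using i A by simp
    also have "\<dots> = 0"
    proof (rule V.orth_span[OF us(1) hc hU[OF h]])
      have "col A i \<in> set (cols A)" using i A by (simp add: cols_def)
      moreover have "set (cols A) \<subseteq> carrier_vec N" using A cols_dim by blast
      moreover have "set (cols A) \<subseteq> V.span (set (cols A))"
        using V.in_own_span[of "set (cols A)"] calculation(2) by simp
      ultimately show "col A i \<in> V.span (set us)" using us(4) by auto
    qed
    finally show "(transpose_mat A *\<^sub>v h) $ i = 0\<^sub>v m $ i" using i by simp
  qed (use A in simp)
  have hB: "transpose_mat B *\<^sub>v h = 0\<^sub>v p" if h: "h \<in> set hs" for h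
  proof (rule eq_vecI)
    have hc: "h \<in> carrier_vec N" using h hsc by auto
    fix i assume "i < dim_vec (0\<^sub>v p :: real vec)"
    then have i: "i < p" by simp
    have "(transpose_mat B *\<^sub>v h) $ i = col B i \<bullet> h" using i B by simp
    also have "\<dots> = 0"
    proof (rule V.orth_span[OF ws(1) hc hW[OF h]])
      have "col B i \<in> set (cols B)" using i B by (simp add: cols_def)
      moreover have "set (cols B) \<subseteq> carrier_vec N" using B cols_dim by blast
      moreover have "set (cols B) \<subseteq> V.span (set (cols B))"
        using V.in_own_span[of "set (cols B)"] calculation(2) by simp
      ultimately show "col B i \<in> V.span (set ws)" using ws(4) by auto
    qed
    finally show "(transpose_mat B *\<^sub>v h) $ i = 0\<^sub>v p $ i" using i by simp
  qed (use B in simp)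
  define M where "M = mat_of_cols N L"
  define Minv where "Minv = mat N N (\<lambda>(i, j). (L ! i) $ j / ((L ! i) \<bullet> (L ! i)))"
  have Mc: "M \<in> carrier_mat N N" unfolding M_def using lenL by (metis mat_of_cols_carrier(1))
  have Minvc: "Minv \<in> carrier_mat N N" unfolding Minv_def by simp
  have MinvM: "Minv * M = 1\<^sub>m N"
  proof (rule eq_matI)
    fix i k assume "i < dim_row (1\<^sub>m N :: real mat)" "k < dim_col (1\<^sub>m N :: real mat)"
    then have i: "i < N" and k: "k < N" by auto
    have Li: "L ! i \<in> set L" and Lk: "L ! k \<in> set L" using i k lenL by auto
    have Lic: "L ! i \<in> carrier_vec N" and Lkc: "L ! k \<in> carrier_vec N" using Li Lk Lc by auto
    have r: "row Minv i = (1 / ((L ! i) \<bullet> (L ! i))) \<cdot>\<^sub>v (L ! i)"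
      by (rule eq_vecI) (use i Lic in \<open>auto simp: Minv_def\<close>)
    have c: "col M k = L ! k" unfolding M_def using k lenL Lkc by (intro col_mat_of_cols) auto
    have "(Minv * M) $$ (i, k) = row Minv i \<bullet> col M k" using i k Minvc Mc by simp
    also have "\<dots> = ((L ! i) \<bullet> (L ! k)) / ((L ! i) \<bullet> (L ! i))"
      unfolding r c using Lic Lkc by simp
    also have "\<dots> = 1\<^sub>m N $$ (i, k)"
    proof (cases "i = k")
      case True
      have "(L ! i) \<bullet> (L ! i) \<noteq> 0" using oL[OF Li Li] by simp
      then show ?thesis using True i by simp
    next
      case False
      have "L ! i \<noteq> L ! k" using False dL i k lenL nth_eq_iff_index_eq by metis
      then have "(L ! i) \<bullet> (L ! k) = 0" using oL[OF Li Lk] by simp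
      then show ?thesis using False i k by simp
    qed
    finally show "(Minv * M) $$ (i, k) = 1\<^sub>m N $$ (i, k)" .
  qed (use Minvc Mc in auto)
  have MMinv: "M * Minv = 1\<^sub>m N" using mat_mult_left_right_inverse[OF Minvc Mc MinvM] .
  have e1: "\<forall>c\<in>carrier_vec (length us). \<exists>y\<in>carrier_vec m. mat_of_cols N us *\<^sub>v c = A *\<^sub>v y"
  proof
    fix c :: "real vec" assume c: "c \<in> carrier_vec (length us)"
    have "mat_of_cols N us *\<^sub>v c \<in> V.span (set us)" using spU c by auto
    then show "\<exists>y\<in>carrier_vec m. mat_of_cols N us *\<^sub>v c = A *\<^sub>v y" using colA by auto
  qed
  have e2: "\<forall>y\<in>carrier_vec m. \<exists>c\<in>carrier_vec (length us). A *\<^sub>v y = mat_of_cols N us *\<^sub>v c"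
  proof
    fix y :: "real vec" assume y: "y \<in> carrier_vec m"
    have "A *\<^sub>v y \<in> V.span (set us)" using colA y by auto
    then show "\<exists>c\<in>carrier_vec (length us). A *\<^sub>v y = mat_of_cols N us *\<^sub>v c" using spU by auto
  qed
  have e3: "\<forall>c\<in>carrier_vec (length ws). \<exists>z\<in>carrier_vec p. mat_of_cols N ws *\<^sub>v c = B *\<^sub>v z"
  proof
    fix c :: "real vec" assume c: "c \<in> carrier_vec (length ws)"
    have "mat_of_cols N ws *\<^sub>v c \<in> V.span (set ws)" using spW c by auto
    then show "\<exists>z\<in>carrier_vec p. mat_of_cols N ws *\<^sub>v c = B *\<^sub>v z" using colB by auto
  qed
  have e4: "\<forall>z\<in>carrier_vec p. \<exists>c\<in>carrier_vec (length ws). B *\<^sub>v z = mat_of_cols N ws *\<^sub>v c"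
  proof
    fix z :: "real vec" assume z: "z \<in> carrier_vec p"
    have "B *\<^sub>v z \<in> V.span (set ws)" using colB z by auto
    then show "\<exists>c\<in>carrier_vec (length ws). B *\<^sub>v z = mat_of_cols N ws *\<^sub>v c" using spW by auto
  qed
  have e5: "\<forall>h\<in>set hs. transpose_mat A *\<^sub>v h = 0\<^sub>v m \<and> transpose_mat B *\<^sub>v h = 0\<^sub>v p"
    using hA hB by auto
  have e6: "length us + length ws + length hs = N" using lenL by (simp add: L_def)
  have e7: "Minv * mat_of_cols N (us @ ws @ hs) = 1\<^sub>m N" "mat_of_cols N (us @ ws @ hs) * Minv = 1\<^sub>m N"
    using MinvM MMinv by (simp_all add: M_def L_def)
  have e8: "length us = vec_space.rank N A" "length ws = vec_space.rank N B" using us(3) ws(3) by auto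
  show ?thesis
    apply (rule exI[of _ us], rule exI[of _ ws], rule exI[of _ hs], rule exI[of _ Minv])
    using us(1) ws(1) hsc e1 e2 e3 e4 e5 e6 e7 e8 Minvc by blast
qed

lemma sum_split_nat: "(\<Sum>j<a+b. f j) = (\<Sum>j<a. f j) + (\<Sum>j<b. f (a+j))"
  for f :: "nat \<Rightarrow> 'a::comm_monoid_add"
  by (induction b) (simp_all add: add.assoc)

lemma mat_of_cols_mult_index:
  assumes i: "i < n" and v: "v \<in> carrier_vec (length vs)"
  shows "(mat_of_cols n vs *\<^sub>v v) $ i = (\<Sum>j<length vs. vs ! j $ i * v $ j)"
proof -
  have "(mat_of_cols n vs *\<^sub>v v) $ i = row (mat_of_cols n vs) i \<bullet> v" using i by simp
  also have "\<dots> = (\<Sum>j<length vs. row (mat_of_cols n vs) i $ j * v $ j)"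
    using v by (simp add: scalar_prod_def lessThan_atLeast0)
  also have "\<dots> = (\<Sum>j<length vs. vs ! j $ i * v $ j)"
    by (rule sum.cong) (use i in \<open>auto simp: mat_of_cols_index\<close>)
  finally show ?thesis .
qed

lemma mat_of_cols_append_mult:
  fixes us ws :: "'a :: comm_semiring_0 vec list"
  assumes x: "x \<in> carrier_vec (length us + length ws)"
  shows "mat_of_cols n (us @ ws) *\<^sub>v x = mat_of_cols n us *\<^sub>v vec (length us) (\<lambda>j. x $ j)
          + mat_of_cols n ws *\<^sub>v vec (length ws) (\<lambda>j. x $ (length us + j))"
proof (rule eq_vecI)
  fix i assume "i < dim_vec (mat_of_cols n us *\<^sub>v vec (length us) (\<lambda>j. x $ j)
          + mat_of_cols n ws *\<^sub>v vec (length ws) (\<lambda>j. x $ (length us + j)))"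
  then have i: "i < n" by simp
  have "(mat_of_cols n (us @ ws) *\<^sub>v x) $ i = (\<Sum>j<length us + length ws. (us @ ws) ! j $ i * x $ j)"
    using mat_of_cols_mult_index[OF i, of x "us @ ws"] x by simp
  also have "\<dots> = (\<Sum>j<length us. (us @ ws) ! j $ i * x $ j) + (\<Sum>j<length ws. (us @ ws) ! (length us + j) $ i * x $ (length us + j))"
    by (rule sum_split_nat)
  also have "\<dots> = (\<Sum>j<length us. us ! j $ i * x $ j) + (\<Sum>j<length ws. ws ! j $ i * x $ (length us + j))"
    by (intro arg_cong2[where f="(+)"] sum.cong) (auto simp: nth_append)
  also have "\<dots> = (mat_of_cols n us *\<^sub>v vec (length us) (\<lambda>j. x $ j)
          + mat_of_cols n ws *\<^sub>v vec (length ws) (\<lambda>j. x $ (length us + j))) $ i"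
  proof -
    have r1: "(mat_of_cols n us *\<^sub>v vec (length us) (\<lambda>j. x $ j)) $ i = (\<Sum>j<length us. us ! j $ i * x $ j)"
    proof -
      have "(mat_of_cols n us *\<^sub>v vec (length us) (\<lambda>j. x $ j)) $ i = (\<Sum>j<length us. us ! j $ i * vec (length us) (\<lambda>j. x $ j) $ j)"
        using mat_of_cols_mult_index[OF i, of "vec (length us) (\<lambda>j. x $ j)" us] by simp
      also have "\<dots> = (\<Sum>j<length us. us ! j $ i * x $ j)" by (rule sum.cong) auto
      finally show ?thesis .
    qed
    have r2: "(mat_of_cols n ws *\<^sub>v vec (length ws) (\<lambda>j. x $ (length us + j))) $ i = (\<Sum>j<length ws. ws ! j $ i * x $ (length us + j))"
    proof -
      have "(mat_of_cols n ws *\<^sub>v vec (length ws) (\<lambda>j. x $ (length us + j))) $ i = (\<Sum>j<length ws. ws ! j $ i * vec (length ws) (\<lambda>j. x $ (length us + j)) $ j)"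
        using mat_of_cols_mult_index[OF i, of "vec (length ws) (\<lambda>j. x $ (length us + j))" ws] by simp
      also have "\<dots> = (\<Sum>j<length ws. ws ! j $ i * x $ (length us + j))" by (rule sum.cong) auto
      finally show ?thesis .
    qed
    show ?thesis using r1 r2 i by simp
  qed
  finally show "(mat_of_cols n (us @ ws) *\<^sub>v x) $ i = (mat_of_cols n us *\<^sub>v vec (length us) (\<lambda>j. x $ j)
          + mat_of_cols n ws *\<^sub>v vec (length ws) (\<lambda>j. x $ (length us + j))) $ i" .
qed simp

lemma mult_mat_of_cols_zero:
  fixes C :: "'a :: comm_semiring_0 mat"
  assumes C: "C \<in> carrier_mat k n" and hs: "set hs \<subseteq> carrier_vec n"
    and z: "\<forall>h\<in>set hs. C *\<^sub>v h = 0\<^sub>v k" and v: "v \<in> carrier_vec (length hs)"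
  shows "C *\<^sub>v (mat_of_cols n hs *\<^sub>v v) = 0\<^sub>v k"
proof -
  have CM: "C * mat_of_cols n hs = 0\<^sub>m k (length hs)"
  proof (rule eq_matI)
    fix i j assume ij: "i < dim_row (0\<^sub>m k (length hs) :: 'a mat)" "j < dim_col (0\<^sub>m k (length hs) :: 'a mat)"
    then have i: "i < k" and j: "j < length hs" by auto
    have hj: "hs ! j \<in> carrier_vec n" using hs j by auto
    have "(C * mat_of_cols n hs) $$ (i, j) = row C i \<bullet> col (mat_of_cols n hs) j" using i j C by simp
    also have "col (mat_of_cols n hs) j = hs ! j" using j hj by simp
    also have "row C i \<bullet> hs ! j = (C *\<^sub>v hs ! j) $ i" using i C by simp
    also have "\<dots> = 0" using z j i by simp
    finally show "(C * mat_of_cols n hs) $$ (i, j) = 0\<^sub>m k (length hs) $$ (i, j)" using i j by simp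
  qed (use C in auto)
  have "C *\<^sub>v (mat_of_cols n hs *\<^sub>v v) = (C * mat_of_cols n hs) *\<^sub>v v"
    using assoc_mult_mat_vec[OF C mat_of_cols_carrier(1) v] by simp
  also have "\<dots> = 0\<^sub>v k" unfolding CM using v
    by (intro eq_vecI) (auto simp: mult_mat_vec_def scalar_prod_def)
  finally show ?thesis .
qed

lemma mat_zero_mult_vec: "v \<in> carrier_vec nc \<Longrightarrow> (0\<^sub>m nr nc :: 'a :: comm_semiring_0 mat) *\<^sub>v v = 0\<^sub>v nr"
  by (intro eq_vecI) (auto simp: mult_mat_vec_def scalar_prod_def)

lemma mat_mult_zero_vec: "(M :: 'a :: comm_semiring_0 mat) \<in> carrier_mat nr nc \<Longrightarrow> M *\<^sub>v 0\<^sub>v nc = 0\<^sub>v nr"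
  by (intro eq_vecI) (auto simp: mult_mat_vec_def scalar_prod_def)

lemma gram_zero:
  fixes C :: "real mat"
  assumes C: "C \<in> carrier_mat N k" and y: "y \<in> carrier_vec k"
    and z: "transpose_mat C *\<^sub>v (C *\<^sub>v y) = 0\<^sub>v k"
  shows "C *\<^sub>v y = 0\<^sub>v N"
proof -
  have Ct: "transpose_mat C \<in> carrier_mat k N" using C by simp
  have Cy: "C *\<^sub>v y \<in> carrier_vec N" using C y by simp
  have "(C *\<^sub>v y) \<bullet> (C *\<^sub>v y) = (transpose_mat (transpose_mat C) *\<^sub>v y) \<bullet> (C *\<^sub>v y)" by simp
  also have "\<dots> = y \<bullet> (transpose_mat C *\<^sub>v (C *\<^sub>v y))" using transpose_vec_mult_scalar[OF Ct Cy y] .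
  also have "\<dots> = 0" unfolding z using y by simp
  finally have "(C *\<^sub>v y) \<bullet>c (C *\<^sub>v y) = 0" by simp
  then show ?thesis using conjugate_square_eq_0_vec[OF Cy] by simp
qed


locale hsetup =
  fixes Bd Bd1 :: "real mat" and m N p :: nat and us ws hs :: "real vec list" and Minv :: "real mat"
  assumes Bd: "Bd \<in> carrier_mat m N" and Bd1: "Bd1 \<in> carrier_mat N p" and Z: "Bd * Bd1 = 0\<^sub>m m p"
    and usc: "set us \<subseteq> carrier_vec N" and wsc: "set ws \<subseteq> carrier_vec N" and hsc: "set hs \<subseteq> carrier_vec N"
    and lens: "length us + length ws + length hs = N"
    and e1: "\<forall>c\<in>carrier_vec (length us). \<exists>y\<in>carrier_vec m. mat_of_cols N us *\<^sub>v c = transpose_mat Bd *\<^sub>v y"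
    and e2: "\<forall>y\<in>carrier_vec m. \<exists>c\<in>carrier_vec (length us). transpose_mat Bd *\<^sub>v y = mat_of_cols N us *\<^sub>v c"
    and e3: "\<forall>c\<in>carrier_vec (length ws). \<exists>z\<in>carrier_vec p. mat_of_cols N ws *\<^sub>v c = Bd1 *\<^sub>v z"
    and e4: "\<forall>z\<in>carrier_vec p. \<exists>c\<in>carrier_vec (length ws). Bd1 *\<^sub>v z = mat_of_cols N ws *\<^sub>v c"
    and e5: "\<forall>h\<in>set hs. transpose_mat (transpose_mat Bd) *\<^sub>v h = 0\<^sub>v m \<and> transpose_mat Bd1 *\<^sub>v h = 0\<^sub>v p"
    and Minvc: "Minv \<in> carrier_mat N N"
    and MinvM: "Minv * mat_of_cols N (us @ ws @ hs) = 1\<^sub>m N"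
    and MMinv: "mat_of_cols N (us @ ws @ hs) * Minv = 1\<^sub>m N"
begin

abbreviation "ka \<equiv> length us"
abbreviation "kb \<equiv> length ws"
abbreviation "kc \<equiv> length hs"
abbreviation "M \<equiv> mat_of_cols N (us @ ws @ hs)"
abbreviation "M1 \<equiv> mat_of_cols N us"
abbreviation "M2 \<equiv> mat_of_cols N ws"
abbreviation "M3 \<equiv> mat_of_cols N hs"

lemma mcv: "v \<in> carrier_vec (length xs) \<Longrightarrow> mat_of_cols n xs *\<^sub>v v \<in> carrier_vec n"
  by (rule mult_mat_vec_carrier[OF mat_of_cols_carrier(1)])

lemma Mc: "M \<in> carrier_mat N N" using lens mat_of_cols_carrier(1)[of N "us @ ws @ hs"] by (simp add: add.assoc)

lemma split:
  assumes x: "x \<in> carrier_vec N"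
  shows "M *\<^sub>v x = M1 *\<^sub>v vec ka (\<lambda>j. x $ j) + M2 *\<^sub>v vec kb (\<lambda>j. x $ (ka + j))
           + M3 *\<^sub>v vec kc (\<lambda>j. x $ (ka + kb + j))"
proof -
  have x': "x \<in> carrier_vec (length us + length (ws @ hs))" using x lens by (simp add: add.assoc)
  define y where "y = vec (length (ws @ hs)) (\<lambda>j. x $ (ka + j))"
  have y: "y \<in> carrier_vec (length ws + length hs)" unfolding y_def by simp
  have "M *\<^sub>v x = M1 *\<^sub>v vec ka (\<lambda>j. x $ j) + mat_of_cols N (ws @ hs) *\<^sub>v y"
    using mat_of_cols_append_mult[OF x'] unfolding y_def by simp
  also have "mat_of_cols N (ws @ hs) *\<^sub>v y = M2 *\<^sub>v vec kb (\<lambda>j. y $ j) + M3 *\<^sub>v vec kc (\<lambda>j. y $ (kb + j))"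
    using mat_of_cols_append_mult[OF y] .
  also have "vec kb (\<lambda>j. y $ j) = vec kb (\<lambda>j. x $ (ka + j))" unfolding y_def by (intro eq_vecI) auto
  also have "vec kc (\<lambda>j. y $ (kb + j)) = vec kc (\<lambda>j. x $ (ka + kb + j))" unfolding y_def
    by (intro eq_vecI) (auto simp: add.assoc)
  finally show ?thesis
    by (subst assoc_add_vec[of _ N]) (auto intro!: mcv)
qed

lemma MinvM1:
  assumes c: "c \<in> carrier_vec ka"
  shows "Minv *\<^sub>v (M1 *\<^sub>v c) = vec N (\<lambda>i. if i < ka then c $ i else 0)"
proof -
  define E where "E = vec N (\<lambda>i. if i < ka then c $ i else 0)"
  have Ec: "E \<in> carrier_vec N" unfolding E_def by simp
  have s1: "vec ka (\<lambda>j. E $ j) = c" unfolding E_def using c lens by (intro eq_vecI) auto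
  have s2: "vec kb (\<lambda>j. E $ (ka + j)) = 0\<^sub>v kb" unfolding E_def using lens by (intro eq_vecI) auto
  have s3: "vec kc (\<lambda>j. E $ (ka + kb + j)) = 0\<^sub>v kc" unfolding E_def using lens by (intro eq_vecI) auto
  have Mc1: "M1 *\<^sub>v c \<in> carrier_vec N" using c by (rule mcv)
  have "M *\<^sub>v E = M1 *\<^sub>v c" unfolding split[OF Ec] s1 s2 s3
    using c Mc1 by (simp add: mat_mult_zero_vec[of _ N])
  then have "Minv *\<^sub>v (M1 *\<^sub>v c) = (Minv * M) *\<^sub>v E"
    using assoc_mult_mat_vec[OF Minvc Mc Ec] by simp
  also have "\<dots> = E" using MinvM Ec by simp
  finally show ?thesis unfolding E_def .
qed

lemma MinvM2:
  assumes c: "c \<in> carrier_vec kb"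
  shows "Minv *\<^sub>v (M2 *\<^sub>v c) = vec N (\<lambda>i. if ka \<le> i \<and> i < ka + kb then c $ (i - ka) else 0)"
proof -
  define E where "E = vec N (\<lambda>i. if ka \<le> i \<and> i < ka + kb then c $ (i - ka) else 0)"
  have Ec: "E \<in> carrier_vec N" unfolding E_def by simp
  have s1: "vec ka (\<lambda>j. E $ j) = 0\<^sub>v ka" unfolding E_def using lens by (intro eq_vecI) auto
  have s2: "vec kb (\<lambda>j. E $ (ka + j)) = c" unfolding E_def using c lens by (intro eq_vecI) auto
  have s3: "vec kc (\<lambda>j. E $ (ka + kb + j)) = 0\<^sub>v kc" unfolding E_def using lens by (intro eq_vecI) auto
  have Mc2: "M2 *\<^sub>v c \<in> carrier_vec N" using c by (rule mcv)
  have "M *\<^sub>v E = M2 *\<^sub>v c" unfolding split[OF Ec] s1 s2 s3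
    using c Mc2 by (simp add: mat_mult_zero_vec[of _ N])
  then have "Minv *\<^sub>v (M2 *\<^sub>v c) = (Minv * M) *\<^sub>v E"
    using assoc_mult_mat_vec[OF Minvc Mc Ec] by simp
  also have "\<dots> = E" using MinvM Ec by simp
  finally show ?thesis unfolding E_def .
qed


lemma vec_minus_self: "(u :: real vec) \<in> carrier_vec k \<Longrightarrow> u - u = 0\<^sub>v k"
  by (intro eq_vecI) auto

lemma transpose_zero_mat: "transpose_mat (0\<^sub>m a b) = 0\<^sub>m b a"
  by (intro eq_matI) auto

lemma Z1: assumes v: "v \<in> carrier_vec kb" shows "Bd *\<^sub>v (M2 *\<^sub>v v) = 0\<^sub>v m"
proof -
  obtain z where z: "z \<in> carrier_vec p" "M2 *\<^sub>v v = Bd1 *\<^sub>v z" using e3 v by blast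
  have "Bd *\<^sub>v (Bd1 *\<^sub>v z) = (Bd * Bd1) *\<^sub>v z" using assoc_mult_mat_vec[OF Bd Bd1 z(1)] by simp
  also have "\<dots> = 0\<^sub>v m" unfolding Z using mat_zero_mult_vec[OF z(1)] .
  finally show ?thesis using z(2) by simp
qed

lemma Z2: assumes v: "v \<in> carrier_vec kc" shows "Bd *\<^sub>v (M3 *\<^sub>v v) = 0\<^sub>v m"
  using mult_mat_of_cols_zero[OF Bd hsc _ v] e5 by simp

lemma Z3: assumes v: "v \<in> carrier_vec ka" shows "transpose_mat Bd1 *\<^sub>v (M1 *\<^sub>v v) = 0\<^sub>v p"
proof -
  obtain y where y: "y \<in> carrier_vec m" "M1 *\<^sub>v v = transpose_mat Bd *\<^sub>v y" using e1 v by blast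
  have Bt: "transpose_mat Bd \<in> carrier_mat N m" and B1t: "transpose_mat Bd1 \<in> carrier_mat p N"
    using Bd Bd1 by auto
  have "transpose_mat Bd1 *\<^sub>v (transpose_mat Bd *\<^sub>v y) = (transpose_mat Bd1 * transpose_mat Bd) *\<^sub>v y"
    using assoc_mult_mat_vec[OF B1t Bt y(1)] by simp
  also have "transpose_mat Bd1 * transpose_mat Bd = transpose_mat (Bd * Bd1)"
    using transpose_mult[OF Bd Bd1] by simp
  also have "\<dots> = 0\<^sub>m p m" unfolding Z by (rule transpose_zero_mat)
  also have "\<dots> *\<^sub>v y = 0\<^sub>v p" using mat_zero_mult_vec[OF y(1)] .
  finally show ?thesis using y(2) by simp
qed

lemma Z4: assumes v: "v \<in> carrier_vec kc" shows "transpose_mat Bd1 *\<^sub>v (M3 *\<^sub>v v) = 0\<^sub>v p"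
proof -
  have B1t: "transpose_mat Bd1 \<in> carrier_mat p N" using Bd1 by auto
  show ?thesis using mult_mat_of_cols_zero[OF B1t hsc _ v] e5 by simp
qed

lemma BdM:
  assumes x: "x \<in> carrier_vec N"
  shows "Bd *\<^sub>v (M *\<^sub>v x) = Bd *\<^sub>v (M1 *\<^sub>v vec ka (\<lambda>j. x $ j))"
proof -
  let ?v1 = "M1 *\<^sub>v vec ka (\<lambda>j. x $ j)"
  let ?v2 = "M2 *\<^sub>v vec kb (\<lambda>j. x $ (ka + j))"
  let ?v3 = "M3 *\<^sub>v vec kc (\<lambda>j. x $ (ka + kb + j))"
  have c1: "?v1 \<in> carrier_vec N" and c2: "?v2 \<in> carrier_vec N" and c3: "?v3 \<in> carrier_vec N"
    by (auto intro!: mcv)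
  have "Bd *\<^sub>v (M *\<^sub>v x) = Bd *\<^sub>v (?v1 + ?v2 + ?v3)" using split[OF x] by simp
  also have "\<dots> = Bd *\<^sub>v ?v1 + Bd *\<^sub>v ?v2 + Bd *\<^sub>v ?v3"
    by (simp only: mult_add_distrib_mat_vec[OF Bd add_carrier_vec[OF c1 c2] c3] mult_add_distrib_mat_vec[OF Bd c1 c2])
  also have "\<dots> = Bd *\<^sub>v ?v1" using Z1 Z2 mult_mat_vec_carrier[OF Bd c1] by simp
  finally show ?thesis .
qed

lemma BtM:
  assumes x: "x \<in> carrier_vec N"
  shows "transpose_mat Bd1 *\<^sub>v (M *\<^sub>v x) = transpose_mat Bd1 *\<^sub>v (M2 *\<^sub>v vec kb (\<lambda>j. x $ (ka + j)))"
proof -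
  let ?v1 = "M1 *\<^sub>v vec ka (\<lambda>j. x $ j)"
  let ?v2 = "M2 *\<^sub>v vec kb (\<lambda>j. x $ (ka + j))"
  let ?v3 = "M3 *\<^sub>v vec kc (\<lambda>j. x $ (ka + kb + j))"
  have c1: "?v1 \<in> carrier_vec N" and c2: "?v2 \<in> carrier_vec N" and c3: "?v3 \<in> carrier_vec N"
    by (auto intro!: mcv)
  have B1t: "transpose_mat Bd1 \<in> carrier_mat p N" using Bd1 by auto
  have "transpose_mat Bd1 *\<^sub>v (M *\<^sub>v x) = transpose_mat Bd1 *\<^sub>v (?v1 + ?v2 + ?v3)" using split[OF x] by simp
  also have "\<dots> = transpose_mat Bd1 *\<^sub>v ?v1 + transpose_mat Bd1 *\<^sub>v ?v2 + transpose_mat Bd1 *\<^sub>v ?v3"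
    by (simp only: mult_add_distrib_mat_vec[OF B1t add_carrier_vec[OF c1 c2] c3] mult_add_distrib_mat_vec[OF B1t c1 c2])
  also have "\<dots> = transpose_mat Bd1 *\<^sub>v ?v2" using Z3 Z4 mult_mat_vec_carrier[OF B1t c2] by simp
  finally show ?thesis .
qed

lemma inj1:
  assumes x: "x \<in> carrier_vec ka" and x': "x' \<in> carrier_vec ka"
    and eq: "Bd *\<^sub>v (M1 *\<^sub>v x) = Bd *\<^sub>v (M1 *\<^sub>v x')"
  shows "x = x'"
proof -
  define d where "d = x - x'"
  have dc: "d \<in> carrier_vec ka" using x x' unfolding d_def by simp
  have Md: "M1 *\<^sub>v d = M1 *\<^sub>v x - M1 *\<^sub>v x'"
    unfolding d_def using mult_minus_distrib_mat_vec[OF mat_of_cols_carrier(1) x x'] .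
  have "Bd *\<^sub>v (M1 *\<^sub>v d) = Bd *\<^sub>v (M1 *\<^sub>v x) - Bd *\<^sub>v (M1 *\<^sub>v x')"
    unfolding Md using mult_minus_distrib_mat_vec[OF Bd mcv[OF x] mcv[OF x']] .
  also have "\<dots> = 0\<^sub>v m" unfolding eq by (rule vec_minus_self, rule mult_mat_vec_carrier[OF Bd mcv[OF x']])
  finally have z: "Bd *\<^sub>v (M1 *\<^sub>v d) = 0\<^sub>v m" .
  obtain y where y: "y \<in> carrier_vec m" "M1 *\<^sub>v d = transpose_mat Bd *\<^sub>v y" using e1 dc by blast
  have Bt: "transpose_mat Bd \<in> carrier_mat N m" using Bd by auto
  have "M1 *\<^sub>v d = 0\<^sub>v N"
    using gram_zero[OF Bt y(1)] z y(2) by simp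
  then have "vec N (\<lambda>i. if i < ka then d $ i else 0) = 0\<^sub>v N"
    using MinvM1[OF dc] mat_mult_zero_vec[OF Minvc] by simp
  then have "\<forall>i<ka. d $ i = 0"
  proof (intro allI impI)
    fix i assume i: "i < ka"
    assume h: "vec N (\<lambda>i. if i < ka then d $ i else 0) = 0\<^sub>v N"
    have "i < N" using i lens by simp
    then have "vec N (\<lambda>i. if i < ka then d $ i else 0) $ i = 0"
      unfolding h by simp
    then show "d $ i = 0" using i \<open>i < N\<close> by simp
  qed
  then show ?thesis using x x' unfolding d_def by (intro eq_vecI) auto
qed

lemma inj2:
  assumes x: "x \<in> carrier_vec kb" and x': "x' \<in> carrier_vec kb"
    and eq: "transpose_mat Bd1 *\<^sub>v (M2 *\<^sub>v x) = transpose_mat Bd1 *\<^sub>v (M2 *\<^sub>v x')"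
  shows "x = x'"
proof -
  define d where "d = x - x'"
  have dc: "d \<in> carrier_vec kb" using x x' unfolding d_def by simp
  have B1t: "transpose_mat Bd1 \<in> carrier_mat p N" using Bd1 by auto
  have Md: "M2 *\<^sub>v d = M2 *\<^sub>v x - M2 *\<^sub>v x'"
    unfolding d_def using mult_minus_distrib_mat_vec[OF mat_of_cols_carrier(1) x x'] .
  have "transpose_mat Bd1 *\<^sub>v (M2 *\<^sub>v d) = transpose_mat Bd1 *\<^sub>v (M2 *\<^sub>v x) - transpose_mat Bd1 *\<^sub>v (M2 *\<^sub>v x')"
    unfolding Md using mult_minus_distrib_mat_vec[OF B1t mcv[OF x] mcv[OF x']] .
  also have "\<dots> = 0\<^sub>v p" unfolding eq by (rule vec_minus_self, rule mult_mat_vec_carrier[OF B1t mcv[OF x']])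
  finally have z: "transpose_mat Bd1 *\<^sub>v (M2 *\<^sub>v d) = 0\<^sub>v p" .
  obtain y where y: "y \<in> carrier_vec p" "M2 *\<^sub>v d = Bd1 *\<^sub>v y" using e3 dc by blast
  have "M2 *\<^sub>v d = 0\<^sub>v N"
    using gram_zero[OF Bd1 y(1)] z y(2) by simp
  then have "vec N (\<lambda>i. if ka \<le> i \<and> i < ka + kb then d $ (i - ka) else 0) = 0\<^sub>v N"
    using MinvM2[OF dc] mat_mult_zero_vec[OF Minvc] by simp
  then have "\<forall>i<kb. d $ i = 0"
  proof (intro allI impI)
    fix i assume i: "i < kb"
    assume h: "vec N (\<lambda>i. if ka \<le> i \<and> i < ka + kb then d $ (i - ka) else 0) = 0\<^sub>v N"
    have "ka + i < N" using i lens by simp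
    then have "vec N (\<lambda>i. if ka \<le> i \<and> i < ka + kb then d $ (i - ka) else 0) $ (ka + i) = 0"
      unfolding h by simp
    then show "d $ i = 0" using i \<open>ka + i < N\<close> by simp
  qed
  then show ?thesis using x x' unfolding d_def by (intro eq_vecI) auto
qed


lemma hodge_carrier: "hodge_field Bd Bd1 Fd Fu x \<in> carrier_vec N"
  using Bd1 unfolding hodge_field_def carrier_vec_def by simp

lemma dir1:
  assumes Fd: "\<forall>y\<in>carrier_vec m. Fd y \<in> carrier_vec m" and Fu: "\<forall>z\<in>carrier_vec p. Fu z \<in> carrier_vec p"
  shows "\<exists>H. ab_vector_field ka kb N H \<and> conjugate_vf N (hodge_field Bd Bd1 Fd Fu) N H"
proof -
  let ?G = "hodge_field Bd Bd1 Fd Fu"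
  define H where "H x = Minv *\<^sub>v ?G (M *\<^sub>v x)" for x
  define H1 where "H1 x1 = vec ka (\<lambda>i. (Minv *\<^sub>v (transpose_mat Bd *\<^sub>v Fd (Bd *\<^sub>v (M1 *\<^sub>v x1)))) $ i)" for x1
  define H2 where "H2 x2 = vec kb (\<lambda>i. (Minv *\<^sub>v (Bd1 *\<^sub>v Fu (transpose_mat Bd1 *\<^sub>v (M2 *\<^sub>v x2)))) $ (ka + i))" for x2
  have ab: "ab_vector_field ka kb N H"
    unfolding ab_vector_field_def
  proof (rule conjI[OF _ exI[of _ H1]], use lens in simp, rule exI[of _ H2], intro conjI ballI)
    show "H1 x \<in> carrier_vec ka" for x unfolding H1_def by simp
    show "H2 x \<in> carrier_vec kb" for x unfolding H2_def by simp
    fix x :: "real vec" assume x: "x \<in> carrier_vec N"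
    define x1 where "x1 = vec ka (\<lambda>j. x $ j)"
    define x2 where "x2 = vec kb (\<lambda>j. x $ (ka + j))"
    have x1c: "x1 \<in> carrier_vec ka" and x2c: "x2 \<in> carrier_vec kb" unfolding x1_def x2_def by auto
    have Bt: "transpose_mat Bd \<in> carrier_mat N m" and B1t: "transpose_mat Bd1 \<in> carrier_mat p N"
      using Bd Bd1 by auto
    have y1: "Fd (Bd *\<^sub>v (M1 *\<^sub>v x1)) \<in> carrier_vec m"
      using Fd mult_mat_vec_carrier[OF Bd mcv[OF x1c]] by blast
    have y2: "Fu (transpose_mat Bd1 *\<^sub>v (M2 *\<^sub>v x2)) \<in> carrier_vec p"
      using Fu mult_mat_vec_carrier[OF B1t mcv[OF x2c]] by blast
    obtain c1 where c1: "c1 \<in> carrier_vec ka" "transpose_mat Bd *\<^sub>v Fd (Bd *\<^sub>v (M1 *\<^sub>v x1)) = M1 *\<^sub>v c1"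
      using e2 y1 by blast
    obtain c2 where c2: "c2 \<in> carrier_vec kb" "Bd1 *\<^sub>v Fu (transpose_mat Bd1 *\<^sub>v (M2 *\<^sub>v x2)) = M2 *\<^sub>v c2"
      using e4 y2 by blast
    have G: "?G (M *\<^sub>v x) = M1 *\<^sub>v c1 + M2 *\<^sub>v c2"
      unfolding hodge_field_def BdM[OF x] BtM[OF x] x1_def[symmetric] x2_def[symmetric] c1(2) c2(2) ..
    have Hx: "H x = vec N (\<lambda>i. if i < ka then c1 $ i else 0)
                + vec N (\<lambda>i. if ka \<le> i \<and> i < ka + kb then c2 $ (i - ka) else 0)"
      unfolding H_def G using mult_add_distrib_mat_vec[OF Minvc mcv[OF c1(1)] mcv[OF c2(1)]]
        MinvM1[OF c1(1)] MinvM2[OF c2(1)] by simp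
    have h1: "H1 x1 = c1"
      unfolding H1_def c1(2) MinvM1[OF c1(1)] using c1(1) lens by (intro eq_vecI) auto
    have h2: "H2 x2 = c2"
      unfolding H2_def c2(2) MinvM2[OF c2(1)] using c2(1) lens by (intro eq_vecI) auto
    show "H x = vec N (\<lambda>i. if i < ka then H1 (vec ka (\<lambda>j. x $ j)) $ i
                   else if i < ka + kb then H2 (vec kb (\<lambda>j. x $ (ka + j))) $ (i - ka) else 0)"
      unfolding x1_def[symmetric] x2_def[symmetric] h1 h2 Hx by (intro eq_vecI) auto
  qed
  have conj: "conjugate_vf N ?G N H"
    unfolding conjugate_vf_def
  proof (rule bexI[of _ Minv], rule bexI[of _ M], intro conjI ballI)
    show "Minv * M = 1\<^sub>m N" by (rule MinvM)
    show "M * Minv = 1\<^sub>m N" by (rule MMinv)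
    show "Minv \<in> carrier_mat N N" by (rule Minvc)
    show "M \<in> carrier_mat N N" by (rule Mc)
    fix x :: "real vec" assume x: "x \<in> carrier_vec N"
    have "M *\<^sub>v (Minv *\<^sub>v x) = (M * Minv) *\<^sub>v x" using assoc_mult_mat_vec[OF Mc Minvc x] by simp
    also have "\<dots> = x" using MMinv x by simp
    finally have e: "M *\<^sub>v (Minv *\<^sub>v x) = x" .
    have "M *\<^sub>v H (Minv *\<^sub>v x) = M *\<^sub>v (Minv *\<^sub>v ?G x)" unfolding H_def e ..
    also have "\<dots> = (M * Minv) *\<^sub>v ?G x" using assoc_mult_mat_vec[OF Mc Minvc hodge_carrier] by simp
    also have "\<dots> = ?G x" using MMinv hodge_carrier by simp
    finally show "?G x = M *\<^sub>v H (Minv *\<^sub>v x)" by simp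
  qed
  show ?thesis using ab conj by blast
qed

lemma dir2:
  assumes H: "ab_vector_field ka kb N H"
  shows "\<exists>Fd Fu. (\<forall>y\<in>carrier_vec m. Fd y \<in> carrier_vec m) \<and> (\<forall>z\<in>carrier_vec p. Fu z \<in> carrier_vec p)
             \<and> conjugate_vf N H N (hodge_field Bd Bd1 Fd Fu)"
proof -
  obtain H1 H2 where H1c: "\<forall>x\<in>carrier_vec ka. H1 x \<in> carrier_vec ka"
    and H2c: "\<forall>y\<in>carrier_vec kb. H2 y \<in> carrier_vec kb"
    and Hf: "\<forall>x\<in>carrier_vec N. H x = vec N (\<lambda>i. if i < ka then H1 (vec ka (\<lambda>j. x $ j)) $ i
                             else if i < ka + kb then H2 (vec kb (\<lambda>j. x $ (ka + j))) $ (i - ka)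
                             else 0)"
    using H[unfolded ab_vector_field_def, THEN conjunct2] by (elim exE conjE) (rule that; assumption)
  define Fd where "Fd y = (if \<exists>x1\<in>carrier_vec ka. Bd *\<^sub>v (M1 *\<^sub>v x1) = y
      then (SOME z. z \<in> carrier_vec m \<and> transpose_mat Bd *\<^sub>v z
              = M1 *\<^sub>v H1 (SOME x1. x1 \<in> carrier_vec ka \<and> Bd *\<^sub>v (M1 *\<^sub>v x1) = y))
      else 0\<^sub>v m)" for y
  define Fu where "Fu y = (if \<exists>x2\<in>carrier_vec kb. transpose_mat Bd1 *\<^sub>v (M2 *\<^sub>v x2) = y
      then (SOME z. z \<in> carrier_vec p \<and> Bd1 *\<^sub>v z
              = M2 *\<^sub>v H2 (SOME x2. x2 \<in> carrier_vec kb \<and> transpose_mat Bd1 *\<^sub>v (M2 *\<^sub>v x2) = y))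
      else 0\<^sub>v p)" for y
  have exz1: "\<exists>z. z \<in> carrier_vec m \<and> transpose_mat Bd *\<^sub>v z = M1 *\<^sub>v H1 x1" if "x1 \<in> carrier_vec ka" for x1
  proof -
    have "H1 x1 \<in> carrier_vec ka" using H1c that by blast
    then obtain y where "y \<in> carrier_vec m" "M1 *\<^sub>v H1 x1 = transpose_mat Bd *\<^sub>v y" using e1 by blast
    then show ?thesis by auto
  qed
  have exz2: "\<exists>z. z \<in> carrier_vec p \<and> Bd1 *\<^sub>v z = M2 *\<^sub>v H2 x2" if "x2 \<in> carrier_vec kb" for x2
  proof -
    have "H2 x2 \<in> carrier_vec kb" using H2c that by blast
    then obtain z where "z \<in> carrier_vec p" "M2 *\<^sub>v H2 x2 = Bd1 *\<^sub>v z" using e3 by blast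
    then show ?thesis by auto
  qed
  have Fdc: "\<forall>y\<in>carrier_vec m. Fd y \<in> carrier_vec m"
  proof
    fix y :: "real vec" assume "y \<in> carrier_vec m"
    show "Fd y \<in> carrier_vec m"
    proof (cases "\<exists>x1\<in>carrier_vec ka. Bd *\<^sub>v (M1 *\<^sub>v x1) = y")
      case True
      let ?x = "SOME x1. x1 \<in> carrier_vec ka \<and> Bd *\<^sub>v (M1 *\<^sub>v x1) = y"
      have "?x \<in> carrier_vec ka" using someI_ex[of "\<lambda>x1. x1 \<in> carrier_vec ka \<and> Bd *\<^sub>v (M1 *\<^sub>v x1) = y"] True by blast
      from someI_ex[OF exz1[OF this]] show ?thesis unfolding Fd_def using True by simp
    next
      case False then show ?thesis unfolding Fd_def by simp
    qed
  qed
  have Fuc: "\<forall>y\<in>carrier_vec p. Fu y \<in> carrier_vec p"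
  proof
    fix y :: "real vec" assume "y \<in> carrier_vec p"
    show "Fu y \<in> carrier_vec p"
    proof (cases "\<exists>x2\<in>carrier_vec kb. transpose_mat Bd1 *\<^sub>v (M2 *\<^sub>v x2) = y")
      case True
      let ?x = "SOME x2. x2 \<in> carrier_vec kb \<and> transpose_mat Bd1 *\<^sub>v (M2 *\<^sub>v x2) = y"
      have "?x \<in> carrier_vec kb" using someI_ex[of "\<lambda>x2. x2 \<in> carrier_vec kb \<and> transpose_mat Bd1 *\<^sub>v (M2 *\<^sub>v x2) = y"] True by blast
      from someI_ex[OF exz2[OF this]] show ?thesis unfolding Fu_def using True by simp
    next
      case False then show ?thesis unfolding Fu_def by simp
    qed
  qed
  have Fd_eq: "transpose_mat Bd *\<^sub>v Fd (Bd *\<^sub>v (M1 *\<^sub>v x1)) = M1 *\<^sub>v H1 x1" if x1: "x1 \<in> carrier_vec ka" for x1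
  proof -
    let ?y = "Bd *\<^sub>v (M1 *\<^sub>v x1)"
    let ?x = "SOME x. x \<in> carrier_vec ka \<and> Bd *\<^sub>v (M1 *\<^sub>v x) = ?y"
    have ex: "\<exists>x\<in>carrier_vec ka. Bd *\<^sub>v (M1 *\<^sub>v x) = ?y" using x1 by blast
    have "?x \<in> carrier_vec ka \<and> Bd *\<^sub>v (M1 *\<^sub>v ?x) = ?y"
      using someI_ex[of "\<lambda>x. x \<in> carrier_vec ka \<and> Bd *\<^sub>v (M1 *\<^sub>v x) = ?y"] ex by blast
    then have xx: "?x = x1" using inj1[OF _ x1] by blast
    have "Fd ?y = (SOME z. z \<in> carrier_vec m \<and> transpose_mat Bd *\<^sub>v z = M1 *\<^sub>v H1 x1)"
      unfolding Fd_def using ex xx by simp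
    with someI_ex[OF exz1[OF x1]] show ?thesis by simp
  qed
  have Fu_eq: "Bd1 *\<^sub>v Fu (transpose_mat Bd1 *\<^sub>v (M2 *\<^sub>v x2)) = M2 *\<^sub>v H2 x2" if x2: "x2 \<in> carrier_vec kb" for x2
  proof -
    let ?y = "transpose_mat Bd1 *\<^sub>v (M2 *\<^sub>v x2)"
    let ?x = "SOME x. x \<in> carrier_vec kb \<and> transpose_mat Bd1 *\<^sub>v (M2 *\<^sub>v x) = ?y"
    have ex: "\<exists>x\<in>carrier_vec kb. transpose_mat Bd1 *\<^sub>v (M2 *\<^sub>v x) = ?y" using x2 by blast
    have "?x \<in> carrier_vec kb \<and> transpose_mat Bd1 *\<^sub>v (M2 *\<^sub>v ?x) = ?y"
      using someI_ex[of "\<lambda>x. x \<in> carrier_vec kb \<and> transpose_mat Bd1 *\<^sub>v (M2 *\<^sub>v x) = ?y"] ex by blast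
    then have xx: "?x = x2" using inj2[OF _ x2] by blast
    have "Fu ?y = (SOME z. z \<in> carrier_vec p \<and> Bd1 *\<^sub>v z = M2 *\<^sub>v H2 x2)"
      unfolding Fu_def using ex xx by simp
    with someI_ex[OF exz2[OF x2]] show ?thesis by simp
  qed
  have conj: "conjugate_vf N H N (hodge_field Bd Bd1 Fd Fu)"
    unfolding conjugate_vf_def
  proof (rule bexI[of _ M], rule bexI[of _ Minv], intro conjI ballI)
    show "Minv * M = 1\<^sub>m N" by (rule MinvM)
    show "M * Minv = 1\<^sub>m N" by (rule MMinv)
    show "Minv \<in> carrier_mat N N" by (rule Minvc)
    show "M \<in> carrier_mat N N" by (rule Mc)
    fix x :: "real vec" assume x: "x \<in> carrier_vec N"
    define x1 where "x1 = vec ka (\<lambda>j. x $ j)"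
    define x2 where "x2 = vec kb (\<lambda>j. x $ (ka + j))"
    have x1c: "x1 \<in> carrier_vec ka" and x2c: "x2 \<in> carrier_vec kb" unfolding x1_def x2_def by auto
    have h1c: "H1 x1 \<in> carrier_vec ka" using H1c x1c by blast
    have h2c: "H2 x2 \<in> carrier_vec kb" using H2c x2c by blast
    have G: "hodge_field Bd Bd1 Fd Fu (M *\<^sub>v x) = M1 *\<^sub>v H1 x1 + M2 *\<^sub>v H2 x2"
      unfolding hodge_field_def BdM[OF x] BtM[OF x] x1_def[symmetric] x2_def[symmetric]
        Fd_eq[OF x1c] Fu_eq[OF x2c] ..
    have "Minv *\<^sub>v hodge_field Bd Bd1 Fd Fu (M *\<^sub>v x)
        = vec N (\<lambda>i. if i < ka then H1 x1 $ i else 0)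
          + vec N (\<lambda>i. if ka \<le> i \<and> i < ka + kb then H2 x2 $ (i - ka) else 0)"
      unfolding G using mult_add_distrib_mat_vec[OF Minvc mcv[OF h1c] mcv[OF h2c]]
        MinvM1[OF h1c] MinvM2[OF h2c] by simp
    also have "\<dots> = H x"
      unfolding Hf[rule_format, OF x] x1_def[symmetric] x2_def[symmetric] by (intro eq_vecI) auto
    finally show "H x = Minv *\<^sub>v hodge_field Bd Bd1 Fd Fu (M *\<^sub>v x)" by simp
  qed
  show ?thesis using Fdc Fuc conj by blast
qed

end

lemma main_generic:
  fixes Bd Bd1 :: "real mat"
  assumes Bd: "Bd \<in> carrier_mat m N" and Bd1: "Bd1 \<in> carrier_mat N p" and Z: "Bd * Bd1 = 0\<^sub>m m p"
  shows "(\<forall>Fdown Fup.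
            (\<forall>y\<in>carrier_vec m. Fdown y \<in> carrier_vec m) \<and>
            (\<forall>z\<in>carrier_vec p. Fup z \<in> carrier_vec p) \<longrightarrow>
            (\<exists>H. ab_vector_field (dim_im (transpose_mat Bd)) (dim_im Bd1) N H \<and>
                 conjugate_vf N (hodge_field Bd Bd1 Fdown Fup) N H))
       \<and>
         (\<forall>H. ab_vector_field (dim_im (transpose_mat Bd)) (dim_im Bd1) N H \<longrightarrow>
            (\<exists>Fdown Fup.
               (\<forall>y\<in>carrier_vec m. Fdown y \<in> carrier_vec m) \<and>
               (\<forall>z\<in>carrier_vec p. Fup z \<in> carrier_vec p) \<and>
               conjugate_vf N H N (hodge_field Bd Bd1 Fdown Fup)))"
proof -
  have Bt: "transpose_mat Bd \<in> carrier_mat N m" using Bd by auto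
  have Z': "transpose_mat (transpose_mat Bd) * Bd1 = 0\<^sub>m m p" using Z by simp
  obtain us ws hs Minv where
    c: "set us \<subseteq> carrier_vec N" "set ws \<subseteq> carrier_vec N" "set hs \<subseteq> carrier_vec N"
    and r: "length us = vec_space.rank N (transpose_mat Bd)" "length ws = vec_space.rank N Bd1"
    and l: "length us + length ws + length hs = N"
    and e1: "\<forall>c\<in>carrier_vec (length us). \<exists>y\<in>carrier_vec m. mat_of_cols N us *\<^sub>v c = transpose_mat Bd *\<^sub>v y"
    and e2: "\<forall>y\<in>carrier_vec m. \<exists>c\<in>carrier_vec (length us). transpose_mat Bd *\<^sub>v y = mat_of_cols N us *\<^sub>v c"
    and e3: "\<forall>c\<in>carrier_vec (length ws). \<exists>z\<in>carrier_vec p. mat_of_cols N ws *\<^sub>v c = Bd1 *\<^sub>v z"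
    and e4: "\<forall>z\<in>carrier_vec p. \<exists>c\<in>carrier_vec (length ws). Bd1 *\<^sub>v z = mat_of_cols N ws *\<^sub>v c"
    and e5: "\<forall>h\<in>set hs. transpose_mat (transpose_mat Bd) *\<^sub>v h = 0\<^sub>v m \<and> transpose_mat Bd1 *\<^sub>v h = 0\<^sub>v p"
    and mi: "Minv \<in> carrier_mat N N" "Minv * mat_of_cols N (us @ ws @ hs) = 1\<^sub>m N"
        "mat_of_cols N (us @ ws @ hs) * Minv = 1\<^sub>m N"
    using basis_construction[OF Bt Bd1 Z'] by blast
  interpret hs: hsetup Bd Bd1 m N p us ws hs Minv
    by (unfold_locales) (fact Bd Bd1 Z c l e1 e2 e3 e4 e5 mi)+
  have d1: "dim_im (transpose_mat Bd) = length us" unfolding dim_im_def using r Bd by simp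
  have d2: "dim_im Bd1 = length ws" unfolding dim_im_def using r Bd1 by simp
  show ?thesis unfolding d1 d2 using hs.dir1 hs.dir2 by blast
qed

theorem mainTheorem1:
  fixes n d :: nat and X :: "nat set set"
    and Lm Ld Lp :: "nat set list"
  assumes "simplicial_complex n X"
    and "distinct Lm" and "set Lm = simplices_card X d"
    and "distinct Ld" and "set Ld = simplices_card X (d + 1)"
    and "distinct Lp" and "set Lp = simplices_card X (d + 2)"
  defines "Bd \<equiv> boundary_matrix Lm Ld"
    and "Bd1 \<equiv> boundary_matrix Ld Lp"
  shows "(\<forall>Fdown Fup.
            (\<forall>y\<in>carrier_vec (length Lm). Fdown y \<in> carrier_vec (length Lm)) \<and>
            (\<forall>z\<in>carrier_vec (length Lp). Fup z \<in> carrier_vec (length Lp)) \<longrightarrow>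
            (\<exists>H. ab_vector_field (dim_im (transpose_mat Bd)) (dim_im Bd1) (length Ld) H \<and>
                 conjugate_vf (length Ld) (hodge_field Bd Bd1 Fdown Fup) (length Ld) H))
       \<and>
         (\<forall>H. ab_vector_field (dim_im (transpose_mat Bd)) (dim_im Bd1) (length Ld) H \<longrightarrow>
            (\<exists>Fdown Fup.
               (\<forall>y\<in>carrier_vec (length Lm). Fdown y \<in> carrier_vec (length Lm)) \<and>
               (\<forall>z\<in>carrier_vec (length Lp). Fup z \<in> carrier_vec (length Lp)) \<and>
               conjugate_vf (length Ld) H (length Ld) (hodge_field Bd Bd1 Fdown Fup)))"
proof -
  have clos: "\<forall>S\<in>X. \<forall>T. T \<noteq> {} \<and> T \<subseteq> S \<longrightarrow> T \<in> X"
    using assms(1) unfolding simplicial_complex_def by blast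
  have Z: "Bd * Bd1 = 0\<^sub>m (length Lm) (length Lp)"
    unfolding Bd_def Bd1_def by (rule boundary_boundary[OF clos assms(4) assms(5) assms(7)])
  have c1: "Bd \<in> carrier_mat (length Lm) (length Ld)" unfolding Bd_def boundary_matrix_def by simp
  have c2: "Bd1 \<in> carrier_mat (length Ld) (length Lp)" unfolding Bd1_def boundary_matrix_def by simp
  show ?thesis by (rule main_generic[OF c1 c2 Z])
qed

end
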